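(* The relation $\{(\rho,\pi):\rho\text{ is total},\ \pi\text{ is trivial},\ |\rho|=|\pi|\}$ is $\Pi_3$-definable in $\mathbf Y^*=\langle\mathcal P,\le,[1]+[1]\rangle$.
   Context: $\mathcal P$ is the set of all integer partitions, including the empty partition $\emptyset$; a partition is a nonincreasing finite sequence of positive integers (its parts), and $|\pi|$ is the sum of its parts. A partition is total if it has exactly one part, and trivial if all its parts equal $1$; $\emptyset$ counts as both. Young's lattice $\mathbf Y=\langle\mathcal P,\le\rangle$ has $(s_1,\dots,s_r)\le(n_1,\dots,n_t)$ iff $r\le t$ and $s_i\le n_i$ for all $i\le r$; $\mathbf Y^*$ is $\mathbf Y$ with a constant symbol for the partition $(1,1)$. A relation is $\Pi_n$-definable if it is defined by a first-order formula in the language $\{\le,(1,1)\}$ in prenex form with $n$ alternating quantifier blocks, the outermost universal, and a quantifier-free matrix. *)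

theory Defs
  imports Main
begin

definition is_partition :: "nat list \<Rightarrow> bool" where
  "is_partition p \<longleftrightarrow> sorted_wrt (\<ge>) p \<and> (\<forall>x\<in>set p. 0 < x)"

definition psize :: "nat list \<Rightarrow> nat" where
  "psize p = sum_list p"

definition total :: "nat list \<Rightarrow> bool" where
  "total p \<longleftrightarrow> length p = 1 \<or> p = []"

definition trivial :: "nat list \<Rightarrow> bool" where
  "trivial p \<longleftrightarrow> (\<forall>x\<in>set p. x = 1)"

definition yle :: "nat list \<Rightarrow> nat list \<Rightarrow> bool" where
  "yle s n \<longleftrightarrow> length s \<le> length n \<and> (\<forall>i<length s. s ! i \<le> n ! i)"

datatype trm = V nat | C

datatype qf = Le trm trm | Eq trm trm | TT | Neg qf | Conj qf qf | Disj qf qf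

datatype form = QF qf | All nat form | Ex nat form

fun eval_trm :: "(nat \<Rightarrow> nat list) \<Rightarrow> trm \<Rightarrow> nat list" where
  "eval_trm e (V x) = e x"
| "eval_trm e C = [1, 1]"

fun sat_qf :: "(nat \<Rightarrow> nat list) \<Rightarrow> qf \<Rightarrow> bool" where
  "sat_qf e (Le s t) = yle (eval_trm e s) (eval_trm e t)"
| "sat_qf e (Eq s t) = (eval_trm e s = eval_trm e t)"
| "sat_qf e TT = True"
| "sat_qf e (Neg q) = (\<not> sat_qf e q)"
| "sat_qf e (Conj p q) = (sat_qf e p \<and> sat_qf e q)"
| "sat_qf e (Disj p q) = (sat_qf e p \<or> sat_qf e q)"

fun sat :: "(nat \<Rightarrow> nat list) \<Rightarrow> form \<Rightarrow> bool" where
  "sat e (QF q) = sat_qf e q"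
| "sat e (All x \<phi>) = (\<forall>p. is_partition p \<longrightarrow> sat (e(x := p)) \<phi>)"
| "sat e (Ex x \<phi>) = (\<exists>p. is_partition p \<and> sat (e(x := p)) \<phi>)"

text \<open>Prenex formulas with n alternating quantifier blocks (blocks may be empty),
  Pi: outermost block universal; Sigma: outermost block existential.\<close>
inductive is_Pi :: "nat \<Rightarrow> form \<Rightarrow> bool" and is_Sigma :: "nat \<Rightarrow> form \<Rightarrow> bool" where
  Pi0: "is_Pi 0 (QF q)"
| Sigma0: "is_Sigma 0 (QF q)"
| Pi_lift: "is_Sigma n \<phi> \<Longrightarrow> is_Pi (Suc n) \<phi>"
| Pi_All: "is_Pi (Suc n) \<phi> \<Longrightarrow> is_Pi (Suc n) (All x \<phi>)"
| Sigma_lift: "is_Pi n \<phi> \<Longrightarrow> is_Sigma (Suc n) \<phi>"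
| Sigma_Ex: "is_Sigma (Suc n) \<phi> \<Longrightarrow> is_Sigma (Suc n) (Ex x \<phi>)"

definition Pi_definable2 :: "nat \<Rightarrow> (nat list \<Rightarrow> nat list \<Rightarrow> bool) \<Rightarrow> bool" where
  "Pi_definable2 n R \<longleftrightarrow>
     (\<exists>\<phi>. is_Pi n \<phi> \<and>
        (\<forall>e. (\<forall>i. is_partition (e i)) \<longrightarrow> (sat e \<phi> \<longleftrightarrow> R (e 0) (e 1))))"

end

theory Submission
  imports Defs
begin


definition gt :: "nat list \<Rightarrow> nat \<Rightarrow> nat" where
  "gt p i = (if i < length p then p ! i else 0)"
definition dec :: "(nat \<Rightarrow> nat) \<Rightarrow> bool" where
  "dec g \<longleftrightarrow> (\<forall>i. g (Suc i) \<le> g i)"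

lemma dec_le: "dec g \<Longrightarrow> i \<le> j \<Longrightarrow> g j \<le> g i"
  unfolding dec_def by (rule lift_Suc_antimono_le) auto

lemma part_pos: "is_partition p \<Longrightarrow> i < length p \<Longrightarrow> 0 < p ! i"
  unfolding is_partition_def by (auto simp: nth_mem)

lemma part_gt_pos: "is_partition p \<Longrightarrow> (0 < gt p i) = (i < length p)"
  using part_pos by (auto simp: gt_def)

lemma part_dec: "is_partition p \<Longrightarrow> dec (gt p)"
  unfolding dec_def gt_def is_partition_def
  by (auto simp: sorted_wrt_iff_nth_less)

lemma yle_gt: assumes p: "is_partition s" shows "yle s n = (\<forall>i. gt s i \<le> gt n i)"
proof
  assume "yle s n" then show "\<forall>i. gt s i \<le> gt n i" by (auto simp: yle_def gt_def)
next
  assume h: "\<forall>i. gt s i \<le> gt n i"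
  have len: "length s \<le> length n"
  proof (rule ccontr)
    assume "\<not> ?thesis" then have "length n < length s" by simp
    then have "0 < gt s (length n)" using part_gt_pos[OF p] by simp
    moreover have "gt n (length n) = 0" by (simp add: gt_def)
    ultimately show False using h[rule_format, of "length n"] by simp
  qed
  show "yle s n" unfolding yle_def
  proof (intro conjI allI impI len)
    fix i assume "i < length s"
    then show "s ! i \<le> n ! i" using h[rule_format, of i] len by (simp add: gt_def)
  qed
qed

lemma part_eq: assumes "is_partition p" "is_partition q" "gt p = gt q" shows "p = q"
proof -
  have "\<forall>i. (i < length p) = (i < length q)"
    using part_gt_pos[OF assms(1)] part_gt_pos[OF assms(2)] assms(3) by metis
  then have l: "length p = length q" by (metis nat_neq_iff)
  show ?thesis
  proof (rule nth_equalityI[OF l])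
    fix i assume "i < length p"
    then show "p ! i = q ! i" using fun_cong[OF assms(3), of i] l by (simp add: gt_def)
  qed
qed

lemma mk_part: "dec g \<Longrightarrow> \<forall>i\<ge>L. g i = 0 \<Longrightarrow> \<exists>p. is_partition p \<and> gt p = g"
proof (induction L)
  case 0 then show ?case by (intro exI[of _ "[]"]) (auto simp: is_partition_def gt_def)
next
  case (Suc L)
  show ?case
  proof (cases "g L = 0")
    case True then have "\<forall>i\<ge>L. g i = 0" using Suc.prems(2)
      by (metis Suc_leI le_eq_less_or_eq)
    then show ?thesis using Suc.IH Suc.prems(1) by blast
  next
    case False
    define p where "p = map g [0..<Suc L]"
    have pos: "i \<le> L \<Longrightarrow> 0 < g i" for i using dec_le[OF Suc.prems(1), of i L] False by simp
    have "is_partition p" unfolding is_partition_def p_def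
      using dec_le[OF Suc.prems(1)] pos
      by (auto simp del: upt_Suc simp: sorted_wrt_iff_nth_less)
    moreover have "gt p = g" using Suc.prems(2) by (auto simp del: upt_Suc simp: gt_def p_def fun_eq_iff)
    ultimately show ?thesis by blast
  qed
qed



lemma domino_fun:
  assumes df: "dec f" and pos: "\<And>i. (0 < f i) = (i < L)" and ne: "f 0 \<noteq> L"
  shows "\<exists>g h. dec g \<and> dec h \<and> (\<forall>i\<ge>L. g i = 0) \<and> (\<forall>i\<ge>L. h i = 0) \<and> (\<forall>i. g i \<le> h i) \<and> g \<noteq> h
     \<and> (\<forall>i. h i \<le> f i) \<and> h \<noteq> f
     \<and> (\<forall>w. dec w \<longrightarrow> (\<forall>i. g i \<le> w i) \<longrightarrow> (\<forall>i. w i \<le> f i) \<longrightarrow> w \<noteq> g \<longrightarrow> w \<noteq> f \<longrightarrow> w = h)"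
proof -
  have fdec: "\<And>a b. a \<le> b \<Longrightarrow> f b \<le> f a" using dec_le[OF df] by blast
  have fS: "\<And>j. f (Suc j) \<le> f j" using df by (simp add: dec_def)
  show ?thesis
  proof (cases "L < f 0")
    case True
    have "\<exists>i<L. f (Suc i) + 2 \<le> f i"
    proof (rule ccontr)
      assume "\<not> ?thesis"
      then have H: "\<And>i. i < L \<Longrightarrow> f i \<le> f (Suc i) + 1" by force
      have "k \<le> L \<Longrightarrow> f 0 \<le> f k + k" for k
      proof (induction k)
        case (Suc k) then have "f k \<le> f (Suc k) + 1" using H by simp
        with Suc show ?case by simp
      qed simp
      from this[of L] have "f 0 \<le> L" using pos[of L] by simp
      with True show False by simp
    qed
    then obtain i where i: "i < L" "f (Suc i) + 2 \<le> f i" by blast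
    define g where "g = f(i := f i - 2)"
    define h where "h = f(i := f i - 1)"
    show ?thesis
    proof (rule exI[of _ g], rule exI[of _ h], intro conjI allI impI)
      show "dec g" unfolding dec_def
      proof
        fix j show "g (Suc j) \<le> g j"
          using i fS[of j] fdec[of j i] by (cases "j = i"; cases "Suc j = i") (auto simp: g_def)
      qed
      show "dec h" unfolding dec_def
      proof
        fix j show "h (Suc j) \<le> h j"
          using i fS[of j] fdec[of j i] by (cases "j = i"; cases "Suc j = i") (auto simp: h_def)
      qed
      show "g k = 0" if "k \<ge> L" for k using that i pos[of k] by (auto simp: g_def)
      show "h k = 0" if "k \<ge> L" for k using that i pos[of k] by (auto simp: h_def)
      show "g k \<le> h k" for k by (auto simp: g_def h_def)
      show "g \<noteq> h" proof assume "g = h" then have "g i = h i" by simp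
        with i show False by (simp add: g_def h_def) qed
      show "h k \<le> f k" for k by (auto simp: h_def)
      show "h \<noteq> f" proof assume "h = f" then have "h i = f i" by simp
        with i show False by (simp add: h_def) qed
      fix w assume wd: "dec w" and lo: "\<forall>k. g k \<le> w k" and up: "\<forall>k. w k \<le> f k"
        and nz: "w \<noteq> g" and nf: "w \<noteq> f"
      have eq: "w j = f j" if "j \<noteq> i" for j using lo up that
        by (metis fun_upd_other g_def le_antisym)
      have a: "w i \<noteq> f i - 2"
      proof assume "w i = f i - 2"
        then have "w = g" using eq by (intro ext, rename_tac x, case_tac "x = i") (auto simp: g_def)
        with nz show False by simp
      qed
      have b: "w i \<noteq> f i"
      proof assume "w i = f i"
        then have "w = f" using eq by (intro ext, rename_tac x, case_tac "x = i") auto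
        with nf show False by simp
      qed
      have "w i = f i - 1" using a b lo[rule_format, of i] up[rule_format, of i] by (simp add: g_def)
      then show "w = h" using eq by (intro ext, rename_tac x, case_tac "x = i") (auto simp: h_def)
    qed
  next
    case False
    then have lt: "f 0 < L" using ne by simp
    define S where "S = {j. Suc j < L \<and> f j = f (Suc j)}"
    have "S \<noteq> {}"
    proof
      assume "S = {}"
      then have H: "\<And>j. Suc j < L \<Longrightarrow> f (Suc j) < f j" using fS
        by (auto simp: S_def) (metis le_neq_implies_less)
      have "k < L \<Longrightarrow> f k + k \<le> f 0" for k
      proof (induction k)
        case (Suc k) then have "f (Suc k) < f k" using H by simp
        with Suc show ?case by simp
      qed simp
      from this[of "L - 1"] lt pos[of "L - 1"] show False by simp
    qed
    have fin: "finite S" by (rule finite_subset[of _ "{..<L}"]) (auto simp: S_def)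
    define i where "i = Max S"
    have iS: "i \<in> S" using fin \<open>S \<noteq> {}\<close> by (simp add: i_def)
    have mx: "\<And>j. j \<in> S \<Longrightarrow> j \<le> i" using fin by (simp add: i_def)
    from iS have i: "Suc i < L" "f i = f (Suc i)" by (auto simp: S_def)
    have nxt: "f (Suc (Suc i)) < f (Suc i)"
    proof (cases "Suc (Suc i) < L")
      case True
      have "f (Suc (Suc i)) \<noteq> f (Suc i)"
      proof assume "f (Suc (Suc i)) = f (Suc i)"
        then have "Suc i \<in> S" using True by (simp add: S_def)
        then show False using mx by fastforce
      qed
      then show ?thesis using fS[of "Suc i"] by simp
    next
      case False then show ?thesis using pos[of "Suc (Suc i)"] pos[of "Suc i"] i by simp
    qed
    define v where "v = f i"
    have vpos: "0 < v" using pos[of i] i by (simp add: v_def)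
    define g where "g = f(i := v - 1, Suc i := v - 1)"
    define h where "h = f(Suc i := v - 1)"
    show ?thesis
    proof (rule exI[of _ g], rule exI[of _ h], intro conjI allI impI)
      show "dec g" unfolding dec_def
      proof
        fix j show "g (Suc j) \<le> g j"
          using i nxt fS[of j] fdec[of j i] unfolding v_def g_def
          by (cases "j = i"; cases "Suc j = i"; cases "j = Suc i") auto
      qed
      show "dec h" unfolding dec_def
      proof
        fix j show "h (Suc j) \<le> h j"
          using i nxt fS[of j] fdec[of j i] unfolding v_def h_def
          by (cases "j = i"; cases "j = Suc i") auto
      qed
      show "g k = 0" if "k \<ge> L" for k using that i pos[of k] by (auto simp: g_def)
      show "h k = 0" if "k \<ge> L" for k using that i pos[of k] by (auto simp: h_def)
      show "g k \<le> h k" for k using i by (auto simp: g_def h_def v_def)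
      show "g \<noteq> h" proof assume "g = h" then have "g i = h i" by simp
        with i vpos show False by (simp add: g_def h_def v_def) qed
      show "h k \<le> f k" for k using i by (auto simp: h_def v_def)
      show "h \<noteq> f" proof assume "h = f" then have "h (Suc i) = f (Suc i)" by simp
        with i vpos show False by (simp add: h_def v_def) qed
      fix w assume wd: "dec w" and lo: "\<forall>k. g k \<le> w k" and up: "\<forall>k. w k \<le> f k"
        and nz: "w \<noteq> g" and nf: "w \<noteq> f"
      have eq: "w j = f j" if "j \<noteq> i" "j \<noteq> Suc i" for j using lo up that
        by (metis fun_upd_other g_def le_antisym)
      have wS: "w (Suc i) \<le> w i" using wd by (simp add: dec_def)
      have r1: "v - 1 \<le> w i" "w i \<le> v" using lo[rule_format, of i] up[rule_format, of i]
        by (auto simp: g_def v_def)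
      have r2: "v - 1 \<le> w (Suc i)" "w (Suc i) \<le> v" using lo[rule_format, of "Suc i"] up[rule_format, of "Suc i"] i
        by (auto simp: g_def v_def)
      have a: "w i = v"
      proof (rule ccontr)
        assume "w i \<noteq> v"
        then have "w i = v - 1" "w (Suc i) = v - 1" using r1 r2 wS by auto
        then have "w = g" using eq by (intro ext, rename_tac x, case_tac "x = i"; case_tac "x = Suc i") (auto simp: g_def)
        with nz show False by simp
      qed
      have b: "w (Suc i) = v - 1"
      proof (rule ccontr)
        assume "w (Suc i) \<noteq> v - 1"
        then have "w (Suc i) = v" using r2 by auto
        then have "w = f" using eq a i by (intro ext, rename_tac x, case_tac "x = i"; case_tac "x = Suc i") (auto simp: v_def)
        with nf show False by simp
      qed
      show "w = h" using eq a b by (intro ext, rename_tac x, case_tac "x = i"; case_tac "x = Suc i") (auto simp: h_def v_def)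
    qed
  qed
qed

lemma stair_fun:
  fixes N :: nat
  assumes "dec z" "dec y" "\<forall>i. z i \<le> y i" "z \<noteq> y" "\<forall>i. y i \<le> N - i" "y \<noteq> (\<lambda>i. N - i)"
  shows "\<exists>w. dec w \<and> (\<forall>i\<ge>N. w i = 0) \<and> (\<forall>i. z i \<le> w i) \<and> w \<noteq> z \<and> (\<forall>i. w i \<le> N - i)
            \<and> w \<noteq> (\<lambda>i. N - i) \<and> w \<noteq> y"
proof -
  define d where "d = (\<lambda>i::nat. N - i)"
  have zd: "\<forall>i. z i \<le> d i"
  proof fix i show "z i \<le> d i" using assms(3)[rule_format, of i] assms(5)[rule_format, of i] by (simp add: d_def) qed
  have "z \<noteq> d"
  proof assume "z = d"
    then have "y = d" using assms(3,5) by (auto simp: fun_eq_iff d_def intro: le_antisym)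
    with assms(6) show False by (simp add: d_def)
  qed
  then obtain i where i: "z i < d i" using zd by (metis fun_eq_iff le_neq_implies_less)
  then have iN: "i < N" unfolding d_def by linarith
  define wk where "wk = (\<lambda>k. d(k := d k - 1))"
  have wk_ok: "dec (wk k) \<and> (\<forall>j\<ge>N. wk k j = 0) \<and> (\<forall>j. z j \<le> wk k j) \<and> (\<forall>j. wk k j \<le> N - j)
            \<and> wk k \<noteq> d" if "k < N" "z k < d k" for k
  proof (intro conjI allI impI)
    show "dec (wk k)" unfolding dec_def wk_def d_def using that by auto
    show "wk k j = 0" if "j \<ge> N" for j using that \<open>k < N\<close> by (auto simp: wk_def d_def)
    show "z j \<le> wk k j" for j using zd that by (auto simp: wk_def)
    show "wk k j \<le> N - j" for j by (auto simp: wk_def d_def)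
    show "wk k \<noteq> d" proof assume "wk k = d" then have "wk k k = d k" by simp
      with that show False by (simp add: wk_def d_def) qed
  qed
  show ?thesis
  proof (cases "\<exists>j. j \<noteq> i \<and> z j < d j")
    case True
    then obtain j where j: "j \<noteq> i" "z j < d j" by blast
    then have jN: "j < N" unfolding d_def by linarith
    have zi: "wk i \<noteq> z" proof assume "wk i = z" then have "wk i j = z j" by simp
      with j show False by (simp add: wk_def) qed
    have zj: "wk j \<noteq> z" proof assume "wk j = z" then have "wk j i = z i" by simp
      with j i show False by (simp add: wk_def) qed
    have dif: "wk i \<noteq> wk j" proof assume "wk i = wk j" then have "wk i i = wk j i" by simp
      with j iN show False by (simp add: wk_def d_def) qed
    show ?thesis
    proof (cases "wk i = y")
      case True
      show ?thesis apply (rule exI[of _ "wk j"]) using wk_ok[OF jN j(2)] dif zj True unfolding d_def by auto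
    next
      case False
      show ?thesis apply (rule exI[of _ "wk i"]) using wk_ok[OF iN i] zi False unfolding d_def by auto
    qed
  next
    case False
    then have eqz: "\<And>j. j \<noteq> i \<Longrightarrow> z j = d j" using zd by (metis le_neq_implies_less)
    have "z (Suc i) = d (Suc i)" using eqz by simp
    moreover have "z (Suc i) \<le> z i" using assms(1) by (simp add: dec_def)
    ultimately have zi: "z i = d i - 1" using i iN by (simp add: d_def)
    have eqy: "y j = d j" if "j \<noteq> i" for j
      using eqz[OF that] assms(3)[rule_format, of j] assms(5)[rule_format, of j] unfolding d_def by simp
    have "y i = d i - 1 \<or> y i = d i" using assms(3)[rule_format, of i] assms(5)[rule_format, of i] zi unfolding d_def
      by arith
    then show ?thesis
    proof
      assume yi: "y i = d i - 1"
      have "y = z"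
      proof (rule ext) fix x show "y x = z x" using yi eqy eqz zi by (cases "x = i") auto qed
      with assms(4) show ?thesis by simp
    next
      assume "y i = d i" then have "y = d" using eqy by (intro ext, rename_tac x, case_tac "x = i") auto
      with assms(6) show ?thesis by (simp add: d_def)
    qed
  qed
qed



definition lt :: "nat list \<Rightarrow> nat list \<Rightarrow> bool" where
  "lt a b \<longleftrightarrow> yle a b \<and> a \<noteq> b"

definition DomP :: "nat list \<Rightarrow> bool" where
  "DomP s \<longleftrightarrow> (\<exists>z y. is_partition z \<and> is_partition y \<and> lt z y \<and> lt y s \<and>
      (\<forall>w. is_partition w \<longrightarrow> lt z w \<longrightarrow> lt w s \<longrightarrow> w = y))"

lemma lt_gt: assumes "is_partition a" "is_partition b"
  shows "lt a b \<longleftrightarrow> (\<forall>i. gt a i \<le> gt b i) \<and> gt a \<noteq> gt b"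
proof -
  have "a \<noteq> b \<longleftrightarrow> gt a \<noteq> gt b" using part_eq[OF assms] by auto
  then show ?thesis unfolding lt_def yle_gt[OF assms(1)] by simp
qed

lemma dom_list: assumes s: "is_partition s" and ne: "gt s 0 \<noteq> length s" shows "DomP s"
proof -
  from domino_fun[OF part_dec[OF s] part_gt_pos[OF s] ne] obtain g where
    "\<exists>h. dec g \<and> dec h \<and> (\<forall>i\<ge>length s. g i = 0) \<and> (\<forall>i\<ge>length s. h i = 0) \<and> (\<forall>i. g i \<le> h i) \<and> g \<noteq> h
     \<and> (\<forall>i. h i \<le> gt s i) \<and> h \<noteq> gt s
     \<and> (\<forall>w. dec w \<longrightarrow> (\<forall>i. g i \<le> w i) \<longrightarrow> (\<forall>i. w i \<le> gt s i) \<longrightarrow> w \<noteq> g \<longrightarrow> w \<noteq> gt s \<longrightarrow> w = h)"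
    by (rule exE)
  then obtain h where H: "dec g \<and> dec h \<and> (\<forall>i\<ge>length s. g i = 0) \<and> (\<forall>i\<ge>length s. h i = 0) \<and> (\<forall>i. g i \<le> h i) \<and> g \<noteq> h
     \<and> (\<forall>i. h i \<le> gt s i) \<and> h \<noteq> gt s
     \<and> (\<forall>w. dec w \<longrightarrow> (\<forall>i. g i \<le> w i) \<longrightarrow> (\<forall>i. w i \<le> gt s i) \<longrightarrow> w \<noteq> g \<longrightarrow> w \<noteq> gt s \<longrightarrow> w = h)"
    by (rule exE)
  have gh: "dec g" "dec h" "\<forall>i\<ge>length s. g i = 0" "\<forall>i\<ge>length s. h i = 0"
     "\<forall>i. g i \<le> h i" "g \<noteq> h" "\<forall>i. h i \<le> gt s i" "h \<noteq> gt s"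
     "\<forall>w. dec w \<longrightarrow> (\<forall>i. g i \<le> w i) \<longrightarrow> (\<forall>i. w i \<le> gt s i) \<longrightarrow> w \<noteq> g \<longrightarrow> w \<noteq> gt s \<longrightarrow> w = h"
    by (insert H, (elim conjE, assumption)+)
  obtain z where z: "is_partition z" "gt z = g" using mk_part[OF gh(1,3)] by blast
  obtain y where y: "is_partition y" "gt y = h" using mk_part[OF gh(2,4)] by blast
  show ?thesis unfolding DomP_def
  proof (rule exI[of _ z], rule exI[of _ y], intro conjI z(1) y(1) allI impI)
    show "lt z y" using lt_gt[OF z(1) y(1)] z(2) y(2) gh(5,6) by simp
    show "lt y s" using lt_gt[OF y(1) s] y(2) gh(7,8) by simp
    fix w assume w: "is_partition w" "lt z w" "lt w s"
    have l1: "\<forall>i. g i \<le> gt w i" "gt w \<noteq> g" using lt_gt[OF z(1) w(1)] w(2) z(2) by auto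
    have l2: "\<forall>i. gt w i \<le> gt s i" "gt w \<noteq> gt s" using lt_gt[OF w(1) s] w(3) by auto
    have "gt w = h" by (rule gh(9)[rule_format, OF part_dec[OF w(1)] _ _ l1(2) l2(2)]) (use l1(1) l2(1) in auto)
    then show "w = y" using part_eq[OF w(1) y(1)] y by simp
  qed
qed

definition stair :: "nat \<Rightarrow> nat list" where "stair N = map (\<lambda>i. N - i) [0..<N]"

lemma gt_stair: "gt (stair N) = (\<lambda>i. N - i)"
  by (auto simp: gt_def stair_def fun_eq_iff)

lemma len_stair: "length (stair N) = N" by (simp add: stair_def)

lemma part_stair: "is_partition (stair N)"
  unfolding is_partition_def stair_def
  by (auto simp del: upt_Suc simp: sorted_wrt_iff_nth_less)

lemma nodom_stair: "\<not> DomP (stair N)"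
proof
  assume "DomP (stair N)"
  then obtain z y where zy: "is_partition z" "is_partition y" "lt z y" "lt y (stair N)"
     and all: "\<forall>w. is_partition w \<longrightarrow> lt z w \<longrightarrow> lt w (stair N) \<longrightarrow> w = y"
    unfolding DomP_def by (elim exE conjE) (rule that)
  have f1: "\<forall>i. gt z i \<le> gt y i" "gt z \<noteq> gt y" using lt_gt[OF zy(1,2)] zy(3) by auto
  have f2: "\<forall>i. gt y i \<le> N - i" "gt y \<noteq> (\<lambda>i. N - i)"
    using lt_gt[OF zy(2) part_stair] zy(4) gt_stair by auto
  from stair_fun[OF part_dec[OF zy(1)] part_dec[OF zy(2)] f1 f2] obtain wf where
    H: "dec wf \<and> (\<forall>i\<ge>N. wf i = 0) \<and> (\<forall>i. gt z i \<le> wf i) \<and> wf \<noteq> gt z \<and> (\<forall>i. wf i \<le> N - i)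
        \<and> wf \<noteq> (\<lambda>i. N - i) \<and> wf \<noteq> gt y" by (rule exE)
  have wf: "dec wf" "\<forall>i\<ge>N. wf i = 0" "\<forall>i. gt z i \<le> wf i" "wf \<noteq> gt z" "\<forall>i. wf i \<le> N - i"
        "wf \<noteq> (\<lambda>i. N - i)" "wf \<noteq> gt y"
    by (insert H, (elim conjE, assumption)+)
  obtain w where w: "is_partition w" "gt w = wf" using mk_part[OF wf(1,2)] by blast
  have "lt z w" using lt_gt[OF zy(1) w(1)] w wf by auto
  moreover have "lt w (stair N)" using lt_gt[OF w(1) part_stair] w wf gt_stair by auto
  ultimately have "w = y" using all w(1) by simp
  with w wf show False by simp
qed



lemma yle11: assumes p: "is_partition p" shows "yle [1,1] p \<longleftrightarrow> 2 \<le> length p"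
proof
  assume "yle [1,1] p" then show "2 \<le> length p" by (simp add: yle_def)
next
  assume l: "2 \<le> length p"
  have "0 < length p" using l by arith
  then have "0 < p!0" using part_pos[OF p] by blast
  moreover have "0 < p!1" using part_pos[OF p, of 1] l by simp
  ultimately show "yle [1,1] p" using l by (auto simp: yle_def less_Suc_eq)
qed

lemma total_iff: "is_partition p \<Longrightarrow> total p \<longleftrightarrow> \<not> yle [1,1] p"
proof -
  assume p: "is_partition p"
  have "\<not> 2 \<le> length p \<longleftrightarrow> length p = 1 \<or> p = []" by (cases p) (auto simp: Suc_le_eq)
  then show ?thesis unfolding total_def yle11[OF p] by simp
qed

lemma trivial_iff: assumes p: "is_partition p"
  shows "trivial p \<longleftrightarrow> (\<forall>x. is_partition x \<longrightarrow> yle x p \<and> \<not> yle [1,1] x \<longrightarrow> yle x [1,1])"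
proof
  assume t: "trivial p"
  show "\<forall>x. is_partition x \<longrightarrow> yle x p \<and> \<not> yle [1,1] x \<longrightarrow> yle x [1,1]"
  proof (intro allI impI)
    fix x assume x: "is_partition x" and h: "yle x p \<and> \<not> yle [1,1] x"
    then have l: "length x \<le> 1" using yle11[OF x] by simp
    have "\<forall>i<length x. x ! i \<le> 1"
    proof (intro allI impI)
      fix i assume "i < length x"
      then have "x ! i \<le> p ! i" "i < length p" using h by (auto simp: yle_def)
      moreover have "p ! i = 1" using t \<open>i < length p\<close> by (simp add: trivial_def)
      ultimately show "x ! i \<le> 1" by simp
    qed
    moreover have "\<forall>i<length x. x ! i \<le> [1,1] ! i"
    proof (intro allI impI)
      fix i assume "i < length x" with l have "i = 0" by simp
      then show "x ! i \<le> [1,1] ! i" using \<open>\<forall>i<length x. x ! i \<le> 1\<close> \<open>i < length x\<close> by simp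
    qed
    ultimately show "yle x [1,1]" using l by (auto simp: yle_def)
  qed
next
  assume h: "\<forall>x. is_partition x \<longrightarrow> yle x p \<and> \<not> yle [1,1] x \<longrightarrow> yle x [1,1]"
  show "trivial p"
  proof (rule ccontr)
    assume "\<not> trivial p"
    then obtain j where j: "j < length p" "p ! j \<noteq> 1" by (auto simp: trivial_def in_set_conv_nth)
    then have "2 \<le> p ! j" using part_pos[OF p j(1)] by simp
    moreover have "p ! j \<le> p ! 0" using p j(1) unfolding is_partition_def
      by (cases "j = 0") (auto simp: sorted_wrt_iff_nth_less)
    ultimately have p0: "2 \<le> p ! 0" by simp
    have "is_partition [2]" by (simp add: is_partition_def)
    moreover have "yle [2] p" using p0 j(1) by (auto simp: yle_def)
    moreover have "\<not> yle [1,1] [2]" by (simp add: yle_def)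
    moreover have "\<not> yle [2] [1,1]" by (simp add: yle_def)
    ultimately show False using h by blast
  qed
qed

lemma rho_le: assumes "is_partition r" "total r" "is_partition s"
  shows "yle r s \<longleftrightarrow> psize r \<le> gt s 0"
proof -
  from assms(2) have "r = [] \<or> (\<exists>a. r = [a])" unfolding total_def
    by (cases r) auto
  then show ?thesis
  proof
    assume "r = []" then show ?thesis by (simp add: yle_def psize_def)
  next
    assume "\<exists>a. r = [a]"
    then obtain a where a: "r = [a]" by blast
    have "0 < a" using part_pos[OF assms(1), of 0] a by simp
    then show ?thesis using a by (auto simp: yle_def psize_def gt_def Suc_le_eq)
  qed
qed

lemma pi_le: assumes "is_partition p" "trivial p" "is_partition s"
  shows "yle p s \<longleftrightarrow> psize p \<le> length s"
proof -
  have r: "p = replicate (length p) 1" using assms(2) unfolding trivial_def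
    by (simp add: replicate_length_same)
  have ps: "psize p = length p" by (subst r) (simp add: psize_def sum_list_replicate)
  show ?thesis unfolding ps yle_def
  proof
    assume "length p \<le> length s \<and> (\<forall>i<length p. p ! i \<le> s ! i)" then show "length p \<le> length s" by simp
  next
    assume l: "length p \<le> length s"
    show "length p \<le> length s \<and> (\<forall>i<length p. p ! i \<le> s ! i)"
    proof (intro conjI allI impI l)
      fix i assume i: "i < length p"
      then have "p ! i = 1" using assms(2) by (simp add: trivial_def)
      moreover have "0 < s ! i" using part_pos[OF assms(3)] i l by simp
      ultimately show "p ! i \<le> s ! i" by simp
    qed
  qed
qed

lemma main_comb:
  assumes r: "is_partition r" "total r" and p: "is_partition p" "trivial p"
  shows "psize r = psize p \<longleftrightarrow> (\<forall>s. is_partition s \<longrightarrow> DomP s \<or> (yle r s \<longleftrightarrow> yle p s))"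
proof
  assume eq: "psize r = psize p"
  show "\<forall>s. is_partition s \<longrightarrow> DomP s \<or> (yle r s \<longleftrightarrow> yle p s)"
  proof (intro allI impI)
    fix s assume s: "is_partition s"
    show "DomP s \<or> (yle r s \<longleftrightarrow> yle p s)"
    proof (cases "gt s 0 = length s")
      case True then show ?thesis using rho_le[OF r s] pi_le[OF p s] eq by simp
    next
      case False then show ?thesis using dom_list[OF s] by simp
    qed
  qed
next
  assume h: "\<forall>s. is_partition s \<longrightarrow> DomP s \<or> (yle r s \<longleftrightarrow> yle p s)"
  show "psize r = psize p"
  proof (rule ccontr)
    assume ne: "psize r \<noteq> psize p"
    define N where "N = min (psize r) (psize p)"
    have "gt (stair N) 0 = N" by (simp add: gt_stair)
    then have "\<not> (yle r (stair N) \<longleftrightarrow> yle p (stair N))"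
      using rho_le[OF r part_stair] pi_le[OF p part_stair] len_stair ne N_def by auto
    then show False using h part_stair nodom_stair by blast
  qed
qed

definition ltq :: "trm \<Rightarrow> trm \<Rightarrow> qf" where "ltq a b = Conj (Le a b) (Neg (Eq a b))"
definition impq :: "qf \<Rightarrow> qf \<Rightarrow> qf" where "impq a b = Disj (Neg a) b"
definition iffq :: "qf \<Rightarrow> qf \<Rightarrow> qf" where "iffq a b = Disj (Conj a b) (Conj (Neg a) (Neg b))"
definition Aq :: qf where "Aq = impq (Conj (Le (V 2) (V 1)) (Neg (Le C (V 2)))) (Le (V 2) C)"
definition Bq :: qf where "Bq = Neg (Le C (V 0))"
definition Dq :: qf where "Dq = Disj (Conj (ltq (V 4) (V 5)) (Conj (ltq (V 5) (V 3))
      (impq (Conj (ltq (V 4) (V 6)) (ltq (V 6) (V 3))) (Eq (V 6) (V 5)))))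
    (iffq (Le (V 0) (V 3)) (Le (V 1) (V 3)))"
definition phi :: form where "phi = All 2 (All 3 (Ex 4 (Ex 5 (All 6 (QF (Conj Aq (Conj Bq Dq)))))))"

lemma phi_Pi: "is_Pi 3 phi"
proof -
  have "is_Pi (Suc 0) (All 6 (QF (Conj Aq (Conj Bq Dq))))" by (intro Pi_All Pi_lift Sigma0)
  then have "is_Sigma (Suc (Suc 0)) (Ex 4 (Ex 5 (All 6 (QF (Conj Aq (Conj Bq Dq))))))"
    by (intro Sigma_Ex Sigma_lift)
  then have "is_Pi (Suc (Suc (Suc 0))) phi" unfolding phi_def by (intro Pi_All Pi_lift)
  then show ?thesis by (simp add: numeral_3_eq_3)
qed

lemma logic_core:
  assumes Pa: "P a"
  shows "(\<forall>x. P x \<longrightarrow> (\<forall>s. P s \<longrightarrow> (\<exists>z. P z \<and> (\<exists>y. P y \<and> (\<forall>w. P w \<longrightarrow> A x \<and> B \<and> (D z y w s \<or> Bl s))))))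
    \<longleftrightarrow> ((\<forall>x. P x \<longrightarrow> A x) \<and> B \<and> (\<forall>s. P s \<longrightarrow> (\<exists>z y. P z \<and> P y \<and> (\<forall>w. P w \<longrightarrow> D z y w s)) \<or> Bl s))"
  (is "?L \<longleftrightarrow> ?R")
proof
  assume H: ?L
  have 1: "A x \<and> B" if "P x" for x
  proof -
    from H that Pa obtain z y where "\<forall>w. P w \<longrightarrow> A x \<and> B \<and> (D z y w a \<or> Bl a)" by blast
    then show ?thesis using Pa by blast
  qed
  have 2: "(\<exists>z y. P z \<and> P y \<and> (\<forall>w. P w \<longrightarrow> D z y w s)) \<or> Bl s" if "P s" for s
  proof (cases "Bl s")
    case False
    from H that Pa obtain z y where "P z" "P y" "\<forall>w. P w \<longrightarrow> A a \<and> B \<and> (D z y w s \<or> Bl s)" by blast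
    then show ?thesis using False by blast
  qed simp
  show ?R using 1 2 Pa by blast
next
  assume R: ?R
  show ?L
  proof (intro allI impI)
    fix x s assume x: "P x" and s: "P s"
    show "\<exists>z. P z \<and> (\<exists>y. P y \<and> (\<forall>w. P w \<longrightarrow> A x \<and> B \<and> (D z y w s \<or> Bl s)))"
    proof (cases "Bl s")
      case True then show ?thesis using R x Pa by blast
    next
      case False
      then obtain z y where "P z" "P y" "\<forall>w. P w \<longrightarrow> D z y w s" using R s by blast
      then show ?thesis using R x by blast
    qed
  qed
qed

lemma pe: "is_partition []" by (simp add: is_partition_def)

lemma DomP_alt: "DomP s \<longleftrightarrow> (\<exists>z y. is_partition z \<and> is_partition y \<and>
   (\<forall>w. is_partition w \<longrightarrow> lt z y \<and> lt y s \<and> (lt z w \<and> lt w s \<longrightarrow> w = y)))"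
  unfolding DomP_def using pe by blast

lemma sat_phi_raw: "sat e phi \<longleftrightarrow> (\<forall>x. is_partition x \<longrightarrow> (\<forall>s. is_partition s \<longrightarrow> (\<exists>z. is_partition z \<and>
   (\<exists>y. is_partition y \<and> (\<forall>w. is_partition w \<longrightarrow> (yle x (e 1) \<longrightarrow> yle [1,1] x \<or> yle x [1,1])
    \<and> \<not> yle [1,1] (e 0) \<and> ((yle z y \<and> z \<noteq> y \<and> yle y s \<and> y \<noteq> s \<and> (yle w s \<longrightarrow> yle z w \<longrightarrow> z = w \<or> w = s \<or> w = y))
        \<or> (yle (e 0) s \<and> yle (e 1) s \<or> \<not> yle (e 0) s \<and> \<not> yle (e 1) s)))))))"
  by (simp add: phi_def Aq_def Bq_def Dq_def ltq_def impq_def iffq_def)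

lemma Aeq: "(yle x q \<longrightarrow> yle [1,1] x \<or> yle x [1,1]) \<longleftrightarrow> (yle x q \<and> \<not> yle [1,1] x \<longrightarrow> yle x [1,1])"
  by blast
lemma Deq: "(yle z y \<and> z \<noteq> y \<and> yle y s \<and> y \<noteq> s \<and> (yle w s \<longrightarrow> yle z w \<longrightarrow> z = w \<or> w = s \<or> w = y))
   \<longleftrightarrow> (lt z y \<and> lt y s \<and> (lt z w \<and> lt w s \<longrightarrow> w = y))"
  by (auto simp: lt_def)
lemma Beq: "(a \<and> b \<or> \<not> a \<and> \<not> b) \<longleftrightarrow> (a \<longleftrightarrow> b)" by blast

lemma sat_phi:
  "sat e phi \<longleftrightarrow> (\<forall>x. is_partition x \<longrightarrow> yle x (e 1) \<and> \<not> yle [1,1] x \<longrightarrow> yle x [1,1])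
     \<and> \<not> yle [1,1] (e 0) \<and> (\<forall>s. is_partition s \<longrightarrow> DomP s \<or> (yle (e 0) s \<longleftrightarrow> yle (e 1) s))"
  unfolding sat_phi_raw DomP_alt Aeq Deq Beq
  by (rule logic_core[where P=is_partition, OF pe])


theorem lemma3p9:
  shows "Pi_definable2 3 (\<lambda>\<rho> \<pi>. total \<rho> \<and> trivial \<pi> \<and> psize \<rho> = psize \<pi>)"
  unfolding Pi_definable2_def
proof (intro exI[of _ phi] conjI phi_Pi allI impI)
  fix e :: "nat \<Rightarrow> nat list" assume e: "\<forall>i. is_partition (e i)"
  have r: "is_partition (e 0)" and p: "is_partition (e 1)" using e by auto
  have t: "total (e 0) \<longleftrightarrow> \<not> yle [1,1] (e 0)" by (rule total_iff[OF r])
  have tr: "trivial (e 1) \<longleftrightarrow> (\<forall>x. is_partition x \<longrightarrow> yle x (e 1) \<and> \<not> yle [1,1] x \<longrightarrow> yle x [1,1])"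
    by (rule trivial_iff[OF p])
  show "sat e phi \<longleftrightarrow> total (e 0) \<and> trivial (e 1) \<and> psize (e 0) = psize (e 1)"
  proof
    assume "sat e phi"
    then have a: "total (e 0)" "trivial (e 1)"
      and c: "\<forall>s. is_partition s \<longrightarrow> DomP s \<or> (yle (e 0) s \<longleftrightarrow> yle (e 1) s)"
      unfolding sat_phi t tr by auto
    show "total (e 0) \<and> trivial (e 1) \<and> psize (e 0) = psize (e 1)"
      using a main_comb[OF r a(1) p a(2)] c by simp
  next
    assume a: "total (e 0) \<and> trivial (e 1) \<and> psize (e 0) = psize (e 1)"
    then have "\<forall>s. is_partition s \<longrightarrow> DomP s \<or> (yle (e 0) s \<longleftrightarrow> yle (e 1) s)"
      using main_comb[OF r _ p] by blast
    then show "sat e phi" unfolding sat_phi using a t tr by blast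
  qed
qed

end
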